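(* Given two curves $\sigma=(v_1,\dots,v_{m'})$ and $\tau=(w_1,\dots,w_{m''})$ in $\mathbb{R}^d$ and a parameter $k\in\mathbb{N}$, the following algorithm returns exactly $d_{k\text{-}DTW}(\sigma,\tau)$ and runs in $O(m'm''z)$ time, where $z$ is the number of distinct distances $\|v_i-w_j\|$ between pairs of vertices of $\sigma$ and $\tau$. Algorithm: set $D[i,j]=\|v_i-w_j\|$ for all $(i,j)\in[m']\times[m'']$; let $E[1]>\dots>E[z]>E[z+1]=0$ be the $z$ distinct entries of $D$ together with $0$, in decreasing order; set mincost $=\infty$; for each $l\in\{1,\dots,z+1\}$, let $D'[i,j]=\max\{D[i,j]-E[l],0\}$ for all $(i,j)$ and update mincost $\leftarrow\min\{\text{mincost},\ \mathrm{DTW}(D')+k\cdot E[l]\}$; return mincost.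
   Context: A traversal of $\sigma$ and $\tau$ is a sequence of index pairs starting with $(1,1)$, ending with $(m',m'')$, where each $(i,j)$ is followed only by $(i+1,j)$, $(i,j+1)$ or $(i+1,j+1)$. For a matrix $D'\in\mathbb{R}^{m'\times m''}$, $\mathrm{DTW}(D')=\min_T\sum_{(i,j)\in T}D'[i,j]$ over all traversals $T$ (computable in $O(m'm'')$ time by dynamic programming). For a traversal $T$ let $s^{(T)}_1\ge s^{(T)}_2\ge\dots$ be the values $\|v_i-w_j\|$, $(i,j)\in T$, sorted non-increasingly, padded with zeros beyond $|T|$; $d_{k\text{-}DTW}(\sigma,\tau)=\min_T\sum_{l=1}^k s^{(T)}_l$. Running time counts each vertex-to-vertex distance computation and each arithmetic operation as unit cost. *)

theory Defs
  imports "HOL-Analysis.Analysis" "HOL-Library.Extended_Real"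
begin

text \<open>Index pairs are 1-based: (i,j) with 1 <= i <= m1, 1 <= j <= m2.\<close>

definition trav_step :: "nat \<times> nat \<Rightarrow> nat \<times> nat \<Rightarrow> bool" where
  "trav_step p q \<longleftrightarrow> q = (fst p + 1, snd p) \<or> q = (fst p, snd p + 1) \<or> q = (fst p + 1, snd p + 1)"

definition is_traversal :: "nat \<Rightarrow> nat \<Rightarrow> (nat \<times> nat) list \<Rightarrow> bool" where
  "is_traversal m1 m2 T \<longleftrightarrow> T \<noteq> [] \<and> hd T = (1, 1) \<and> last T = (m1, m2) \<and>
     (\<forall>i. Suc i < length T \<longrightarrow> trav_step (T ! i) (T ! Suc i))"

definition DTW :: "nat \<Rightarrow> nat \<Rightarrow> (nat \<Rightarrow> nat \<Rightarrow> real) \<Rightarrow> real" where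
  "DTW m1 m2 D' = Min ((\<lambda>T. sum_list (map (\<lambda>(i, j). D' i j) T)) ` {T. is_traversal m1 m2 T})"

text \<open>Sum of the k largest values ||v_i - w_j||, (i,j) in T (padding with zeros beyond |T|
  amounts to summing fewer terms).\<close>
definition topk_cost :: "nat \<Rightarrow> (nat \<Rightarrow> 'a::real_normed_vector) \<Rightarrow> (nat \<Rightarrow> 'a) \<Rightarrow> (nat \<times> nat) list \<Rightarrow> real" where
  "topk_cost k v w T = sum_list (take k (rev (sort (map (\<lambda>(i, j). norm (v i - w j)) T))))"

definition kDTW :: "nat \<Rightarrow> (nat \<Rightarrow> 'a::real_normed_vector) \<Rightarrow> nat \<Rightarrow> (nat \<Rightarrow> 'a) \<Rightarrow> nat \<Rightarrow> real" where
  "kDTW k v m1 w m2 = Min (topk_cost k v w ` {T. is_traversal m1 m2 T})"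

definition num_dist :: "(nat \<Rightarrow> 'a::real_normed_vector) \<Rightarrow> nat \<Rightarrow> (nat \<Rightarrow> 'a) \<Rightarrow> nat \<Rightarrow> nat" where
  "num_dist v m1 w m2 = card {norm (v i - w j) | i j. i \<in> {1..m1} \<and> j \<in> {1..m2}}"

text \<open>Every computation returns a pair (result, number of unit-cost operations).
  Unit-cost operations: each vertex-to-vertex distance computation and each arithmetic
  operation / comparison (including min, max).\<close>

fun map_c :: "('a \<Rightarrow> 'b \<times> nat) \<Rightarrow> 'a list \<Rightarrow> 'b list \<times> nat" where
  "map_c f [] = ([], 0)"
| "map_c f (x # xs) = (let (y, c1) = f x; (ys, c2) = map_c f xs in (y # ys, c1 + c2))"

definition dist_matrix :: "(nat \<Rightarrow> 'a::real_normed_vector) \<Rightarrow> nat \<Rightarrow> (nat \<Rightarrow> 'a) \<Rightarrow> nat \<Rightarrow> real list list \<times> nat" where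
  "dist_matrix v m1 w m2 =
     map_c (\<lambda>i. map_c (\<lambda>j. (norm (v i - w j), 1)) [1..<m2 + 1]) [1..<m1 + 1]"

fun ins_desc :: "real \<Rightarrow> real list \<Rightarrow> real list \<times> nat" where
  "ins_desc x [] = ([x], 0)"
| "ins_desc x (y # ys) =
     (if x = y then (y # ys, 1)
      else if y < x then (x # y # ys, 2)
      else (let (r, c) = ins_desc x ys in (y # r, c + 2)))"

fun ins_all :: "real list \<Rightarrow> real list \<Rightarrow> real list \<times> nat" where
  "ins_all [] acc = (acc, 0)"
| "ins_all (x # xs) acc = (let (acc', c1) = ins_desc x acc; (r, c2) = ins_all xs acc' in (r, c1 + c2))"

definition thresholds :: "real list list \<Rightarrow> real list \<times> nat" where
  "thresholds D = (let (E, c) = ins_all (concat D) [] in (E @ [0], c))"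

definition shifted :: "real \<Rightarrow> real list list \<Rightarrow> real list list \<times> nat" where
  "shifted e D = map_c (\<lambda>row. map_c (\<lambda>x. (max (x - e) 0, 2)) row) D"

text \<open>Dynamic programme for DTW, row by row.
  C[1,1] = D'[1,1], C[1,j] = C[1,j-1] + D'[1,j], C[i,1] = C[i-1,1] + D'[i,1],
  C[i,j] = D'[i,j] + min (min C[i-1,j-1] C[i-1,j]) C[i,j-1].\<close>

fun first_row_aux :: "real \<Rightarrow> real list \<Rightarrow> real list \<times> nat" where
  "first_row_aux acc [] = ([], 0)"
| "first_row_aux acc (x # xs) = (let c = acc + x; (r, t) = first_row_aux c xs in (c # r, t + 1))"

fun first_row :: "real list \<Rightarrow> real list \<times> nat" where
  "first_row [] = ([], 0)"
| "first_row (x # xs) = (let (r, t) = first_row_aux x xs in (x # r, t))"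

fun row_aux :: "real \<Rightarrow> real \<Rightarrow> real list \<Rightarrow> real list \<Rightarrow> real list \<times> nat" where
  "row_aux left diag (p # ps) (x # xs) =
     (let c = x + min (min diag p) left; (r, t) = row_aux c p ps xs in (c # r, t + 3))"
| "row_aux left diag _ _ = ([], 0)"

fun next_row :: "real list \<Rightarrow> real list \<Rightarrow> real list \<times> nat" where
  "next_row (p # ps) (x # xs) = (let c = p + x; (r, t) = row_aux c p ps xs in (c # r, t + 1))"
| "next_row _ _ = ([], 0)"

fun dp_rows :: "real list \<Rightarrow> real list list \<Rightarrow> real list \<times> nat" where
  "dp_rows prev [] = (prev, 0)"
| "dp_rows prev (r # rs) = (let (nr, c1) = next_row prev r; (res, c2) = dp_rows nr rs in (res, c1 + c2))"

fun dtw_dp :: "real list list \<Rightarrow> real \<times> nat" where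
  "dtw_dp [] = (0, 0)"
| "dtw_dp (r # rs) = (let (fr, c1) = first_row r; (lr, c2) = dp_rows fr rs in (last lr, c1 + c2))"

text \<open>Main loop over l = 1..z+1: mincost := min mincost (DTW(D') + k * E[l]).
  Costs: building D', the DP, one multiplication, one addition and one min.\<close>
fun main_loop :: "nat \<Rightarrow> real list list \<Rightarrow> real list \<Rightarrow> ereal \<Rightarrow> ereal \<times> nat" where
  "main_loop k D [] mincost = (mincost, 0)"
| "main_loop k D (e # es) mincost =
     (let (D', c1) = shifted e D;
          (d, c2) = dtw_dp D';
          mincost' = min mincost (ereal (d + real k * e));
          (res, c3) = main_loop k D es mincost'
      in (res, c1 + c2 + 3 + c3))"

definition kDTW_alg :: "nat \<Rightarrow> (nat \<Rightarrow> 'a::real_normed_vector) \<Rightarrow> nat \<Rightarrow> (nat \<Rightarrow> 'a) \<Rightarrow> nat \<Rightarrow> ereal \<times> nat" where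
  "kDTW_alg k v m1 w m2 =
     (let (D, c1) = dist_matrix v m1 w m2;
          (E, c2) = thresholds D;
          (res, c3) = main_loop k D E \<infinity>
      in (res, c1 + c2 + c3))"

end

theory Submission
  imports Defs
begin

lemma map_c_eq: "map_c f xs = (map (fst o f) xs, sum_list (map (snd o f) xs))"
  by (induction xs) (auto split: prod.splits)

lemma dist_matrix_eq: "dist_matrix v m1 w m2 =
  (map (\<lambda>i. map (\<lambda>j. norm (v i - w j)) [1..<m2+1]) [1..<m1+1], m1 * m2)"
  by (simp add: dist_matrix_def map_c_eq o_def map_replicate_const sum_list_replicate)

lemma ins_desc_prop: "sorted_wrt (>) acc \<Longrightarrow> ins_desc x acc = (r,c) \<Longrightarrow>
   sorted_wrt (>) r \<and> set r = insert x (set acc) \<and> c \<le> 2 * length acc"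
proof (induction acc arbitrary: r c)
  case Nil
  then show ?case by auto
next
  case (Cons y ys)
  show ?case
  proof (cases "x = y")
    case True then show ?thesis using Cons.prems by auto
  next
    case False
    show ?thesis
    proof (cases "y < x")
      case True then show ?thesis using Cons.prems False by auto (metis less_trans)
    next
      case nlt: False
      obtain r' c' where rc: "ins_desc x ys = (r', c')" by fastforce
      have IH: "sorted_wrt (>) r' \<and> set r' = insert x (set ys) \<and> c' \<le> 2 * length ys"
        using Cons.IH[OF _ rc] Cons.prems by auto
      have "r = y # r'" "c = c' + 2" using Cons.prems False nlt rc by auto
      then show ?thesis using IH Cons.prems False nlt by auto
    qed
  qed
qed

lemma sorted_gt_distinct: "sorted_wrt (>) (xs::real list) \<Longrightarrow> distinct xs"
  by (induction xs) auto

lemma ins_all_prop: "sorted_wrt (>) acc \<Longrightarrow> set acc \<subseteq> S \<Longrightarrow> set xs \<subseteq> S \<Longrightarrow> finite S \<Longrightarrow>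
  ins_all xs acc = (r,c) \<Longrightarrow> sorted_wrt (>) r \<and> set r = set acc \<union> set xs \<and> c \<le> 2 * length xs * card S"
proof (induction xs arbitrary: acc r c)
  case Nil
  then show ?case by auto
next
  case (Cons x xs)
  obtain a1 c1 where r1: "ins_desc x acc = (a1, c1)" by fastforce
  obtain r2 c2 where r2: "ins_all xs a1 = (r2, c2)" by fastforce
  have P1: "sorted_wrt (>) a1 \<and> set a1 = insert x (set acc) \<and> c1 \<le> 2 * length acc"
    using ins_desc_prop[OF Cons.prems(1) r1] .
  have P2: "sorted_wrt (>) r2 \<and> set r2 = set a1 \<union> set xs \<and> c2 \<le> 2 * length xs * card S"
    using Cons.IH[OF _ _ _ Cons.prems(4) r2] P1 Cons.prems by auto
  have "length acc = card (set acc)" using sorted_gt_distinct[OF Cons.prems(1)] by (simp add: distinct_card)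
  also have "\<dots> \<le> card S" using Cons.prems by (simp add: card_mono)
  finally have "length acc \<le> card S" .
  moreover have "r = r2" "c = c1 + c2" using Cons.prems(5) r1 r2 by auto
  ultimately show ?case using P1 P2 by auto
qed

lemma topk_le: "0 \<le> t \<Longrightarrow> sum_list (take k ys) \<le> real k * t + sum_list (map (\<lambda>x. max (x - t) 0) ys)"
proof (induction ys arbitrary: k)
  case Nil
  then show ?case by simp
next
  case (Cons y ys)
  show ?case
  proof (cases k)
    case 0
    have "0 \<le> sum_list (map (\<lambda>x. max (x - t) 0) (y#ys))" by (rule sum_list_nonneg) auto
    then show ?thesis using 0 by simp
  next
    case (Suc k')
    have "sum_list (take k' ys) \<le> real k' * t + sum_list (map (\<lambda>x. max (x - t) 0) ys)"
      using Cons by blast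
    then show ?thesis using Suc by (simp add: algebra_simps)
  qed
qed

lemma topk_eq: "(\<forall>y\<in>set (take k ys). t \<le> y) \<Longrightarrow> (\<forall>y\<in>set (drop k ys). y \<le> t) \<Longrightarrow>
   (k \<le> length ys \<or> t = 0) \<Longrightarrow>
   sum_list (take k ys) = real k * t + sum_list (map (\<lambda>x. max (x - t) 0) ys)"
proof (induction ys arbitrary: k)
  case Nil
  then show ?case by auto
next
  case (Cons y ys)
  show ?case
  proof (cases k)
    case 0
    then have eq: "map (\<lambda>x. max (x - t) 0) (y#ys) = map (\<lambda>x. 0) (y#ys)" using Cons.prems
      by (intro map_cong) auto
    have "sum_list (map (\<lambda>x. max (x - t) 0) (y#ys)) = 0" by (simp only: eq) (simp add: map_replicate_const sum_list_replicate)
    then show ?thesis using 0 by simp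
  next
    case (Suc k')
    have "sum_list (take k' ys) = real k' * t + sum_list (map (\<lambda>x. max (x - t) 0) ys)"
      using Cons Suc by auto
    moreover have "t \<le> y" using Cons.prems Suc by auto
    ultimately show ?thesis using Suc by (simp add: algebra_simps)
  qed
qed

lemma sum_perm: "sum_list (map (h::real \<Rightarrow> real) (rev (sort xs))) = sum_list (map h (xs::real list))"
proof -
  have "sum_list (map h (rev (sort xs))) = sum_mset (mset (map h (rev (sort xs))))"
    by (rule sum_mset_sum_list[symmetric])
  also have "\<dots> = sum_mset (mset (map h xs))" by simp
  also have "\<dots> = sum_list (map h xs)" by (rule sum_mset_sum_list)
  finally show ?thesis .
qed

lemma topk_bound: "0 \<le> t \<Longrightarrow> sum_list (take k (rev (sort xs))) \<le> real k * t + sum_list (map (\<lambda>x. max (x-t) 0) xs)"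
proof -
  assume t: "0 \<le> t"
  have "sum_list (take k (rev (sort xs))) \<le> real k * t + sum_list (map (\<lambda>x. max (x-t) 0) (rev (sort xs)))"
    by (rule topk_le[OF t])
  then show ?thesis using sum_perm[of "\<lambda>x. max (x-t) 0" xs] by simp
qed

lemma topk_exact: "\<forall>x\<in>set xs. 0 \<le> (x::real) \<Longrightarrow> \<exists>t \<in> insert 0 (set xs).
   sum_list (take k (rev (sort xs))) = real k * t + sum_list (map (\<lambda>x. max (x-t) 0) xs)"
proof -
  assume nn: "\<forall>x\<in>set xs. 0 \<le> (x::real)"
  define ys where "ys = rev (sort xs)"
  have len: "length ys = length xs" by (simp add: ys_def)
  have sety: "set ys = set xs" by (simp add: ys_def)
  have desc: "ys ! j \<le> ys ! i" if "i \<le> j" "j < length ys" for i j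
  proof -
    have "sort xs ! (length xs - Suc j) \<le> sort xs ! (length xs - Suc i)"
      by (rule sorted_nth_mono) (use that len in auto)
    then show ?thesis using that len by (simp add: ys_def rev_nth)
  qed
  define t where "t = (if k < length ys then ys ! (k - 1) else 0)"
  have tin: "t \<in> insert 0 (set xs)" using sety by (auto simp: t_def)
  have c1: "\<forall>y\<in>set (take k ys). t \<le> y"
  proof
    fix y assume "y \<in> set (take k ys)"
    then obtain i where i: "i < length (take k ys)" "y = take k ys ! i" by (auto simp: in_set_conv_nth)
    then have "i < k" "i < length ys" "y = ys ! i" by auto
    then have "y \<in> set xs" using sety nth_mem by metis
    then have "0 \<le> y" using nn by blast
    then show "t \<le> y" using desc[of i "k-1"] \<open>i < k\<close> \<open>i < length ys\<close> \<open>y = ys ! i\<close>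
      unfolding t_def by auto
  qed
  have c2: "\<forall>y\<in>set (drop k ys). y \<le> t"
  proof
    fix y assume "y \<in> set (drop k ys)"
    then obtain i where i: "i < length (drop k ys)" "y = drop k ys ! i" by (auto simp: in_set_conv_nth)
    then have "k + i < length ys" "y = ys ! (k+i)" by auto
    then show "y \<le> t" using desc[of "k-1" "k+i"] unfolding t_def by auto
  qed
  have c3: "k \<le> length ys \<or> t = 0" by (auto simp: t_def)
  have "sum_list (take k ys) = real k * t + sum_list (map (\<lambda>x. max (x - t) 0) ys)"
    by (rule topk_eq[OF c1 c2 c3])
  then have "sum_list (take k (rev (sort xs))) = real k * t + sum_list (map (\<lambda>x. max (x-t) 0) xs)"
    using sum_perm[of "\<lambda>x. max (x-t) 0" xs] unfolding ys_def by simp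
  then show ?thesis using tin by blast
qed


lemma trav_mono: "is_traversal m1 m2 T \<Longrightarrow> a \<le> b \<Longrightarrow> b < length T \<Longrightarrow>
  fst (T!a) \<le> fst (T!b) \<and> snd (T!a) \<le> snd (T!b) \<and> fst (T!a) + snd (T!a) + (b - a) \<le> fst (T!b) + snd (T!b)"
proof (induction b)
  case 0
  then show ?case by simp
next
  case (Suc b)
  show ?case
  proof (cases "a = Suc b")
    case True then show ?thesis by simp
  next
    case False
    then have "a \<le> b" using Suc.prems by simp
    then have IH: "fst (T!a) \<le> fst (T!b) \<and> snd (T!a) \<le> snd (T!b) \<and> fst (T!a) + snd (T!a) + (b - a) \<le> fst (T!b) + snd (T!b)"
      using Suc by simp
    have "trav_step (T!b) (T!Suc b)" using Suc.prems unfolding is_traversal_def by blast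
    then show ?thesis using IH \<open>a \<le> b\<close> unfolding trav_step_def by auto
  qed
qed

lemma trav_bounds: assumes "is_traversal m1 m2 T"
  shows "set T \<subseteq> {1..m1} \<times> {1..m2}" "length T + 1 \<le> m1 + m2" "1 \<le> m1" "1 \<le> m2"
proof -
  have ne: "T \<noteq> []" and h: "T ! 0 = (1,1)" and l: "T ! (length T - 1) = (m1, m2)"
    using assms unfolding is_traversal_def by (auto simp: hd_conv_nth last_conv_nth)
  have lt: "length T - 1 < length T" using ne by simp
  show "set T \<subseteq> {1..m1} \<times> {1..m2}"
  proof
    fix x assume "x \<in> set T"
    then obtain a where a: "a < length T" "x = T ! a" by (auto simp: in_set_conv_nth)
    have "fst (T!0) \<le> fst (T!a) \<and> snd (T!0) \<le> snd (T!a)" using trav_mono[OF assms, of 0 a] a by simp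
    moreover have "fst (T!a) \<le> fst (T!(length T - 1)) \<and> snd (T!a) \<le> snd (T!(length T - 1))"
      using trav_mono[OF assms, of a "length T - 1"] a by simp
    ultimately show "x \<in> {1..m1} \<times> {1..m2}" using h l a by (simp add: mem_Times_iff)
  qed
  have "fst (T!0) + snd (T!0) + (length T - 1 - 0) \<le> fst (T!(length T - 1)) + snd (T!(length T - 1))"
    using trav_mono[OF assms, of 0 "length T - 1"] lt by blast
  then show "length T + 1 \<le> m1 + m2" using h l ne by simp
  have "fst (T!0) \<le> fst (T!(length T - 1)) \<and> snd (T!0) \<le> snd (T!(length T - 1))"
    using trav_mono[OF assms, of 0 "length T - 1"] lt by blast
  then show "1 \<le> m1" "1 \<le> m2" using h l by auto
qed

lemma trav_finite: "finite {T. is_traversal m1 m2 T}"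
proof (rule finite_subset)
  show "{T. is_traversal m1 m2 T} \<subseteq> {T. set T \<subseteq> {1..m1} \<times> {1..m2} \<and> length T \<le> m1 + m2}"
    using trav_bounds by fastforce
  show "finite {T. set T \<subseteq> {1..m1} \<times> {1..m2} \<and> length T \<le> m1 + m2}"
    by (rule finite_lists_length_le) simp
qed

lemma trav_snoc: assumes "is_traversal i' j' T" "trav_step (i',j') (i,j)"
  shows "is_traversal i j (T @ [(i,j)])"
proof -
  have ne: "T \<noteq> []" and h: "hd T = (1,1)" and l: "last T = (i',j')"
    and st: "\<forall>n. Suc n < length T \<longrightarrow> trav_step (T ! n) (T ! Suc n)"
    using assms unfolding is_traversal_def by auto
  have "trav_step ((T @ [(i,j)]) ! n) ((T @ [(i,j)]) ! Suc n)" if "Suc n < length (T @ [(i,j)])" for n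
  proof (cases "Suc n < length T")
    case True then show ?thesis using st by (simp add: nth_append)
  next
    case False
    then have "n = length T - 1" using that by simp
    then show ?thesis using ne l assms(2) by (simp add: nth_append last_conv_nth)
  qed
  then show ?thesis using ne h unfolding is_traversal_def by auto
qed

lemma trav_butlast: assumes "is_traversal i j T" "2 \<le> length T"
  shows "is_traversal (fst (last (butlast T))) (snd (last (butlast T))) (butlast T)
     \<and> trav_step (last (butlast T)) (i,j) \<and> T = butlast T @ [(i,j)]"
proof -
  have ne: "T \<noteq> []" and h: "hd T = (1,1)" and l: "last T = (i,j)"
    and st: "\<forall>n. Suc n < length T \<longrightarrow> trav_step (T ! n) (T ! Suc n)"
    using assms unfolding is_traversal_def by auto
  have ne2: "butlast T \<noteq> []" using assms(2) by (cases T) auto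
  have h2: "hd (butlast T) = (1,1)" using h ne2 by (metis append_butlast_last_id hd_append2 ne)
  have st2: "\<forall>n. Suc n < length (butlast T) \<longrightarrow> trav_step (butlast T ! n) (butlast T ! Suc n)"
    using st by (simp add: nth_butlast)
  have "last (butlast T) = T ! (length T - 2)" using ne2 assms(2)
    by (simp add: last_conv_nth nth_butlast numeral_2_eq_2)
  moreover have "(i,j) = T ! Suc (length T - 2)" using l ne assms(2)
    by (simp add: last_conv_nth Suc_diff_Suc numeral_2_eq_2)
  ultimately have "trav_step (last (butlast T)) (i,j)" using st assms(2) by auto
  then show ?thesis using ne2 h2 st2 unfolding is_traversal_def
    by (simp add: l[symmetric] ne)
qed

lemma trav_11: "is_traversal 1 1 T \<Longrightarrow> T = [(1,1)]"
proof -
  assume a: "is_traversal 1 1 T"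
  then have "length T + 1 \<le> 2" using trav_bounds(2)[OF a] by simp
  moreover have "T \<noteq> []" "hd T = (1,1)" using a unfolding is_traversal_def by auto
  ultimately show ?thesis by (cases T) auto
qed

fun opt :: "(nat \<Rightarrow> nat \<Rightarrow> real) \<Rightarrow> nat \<Rightarrow> nat \<Rightarrow> real" where
  "opt M 0 j = 0"
| "opt M i 0 = 0"
| "opt M (Suc 0) (Suc 0) = M 1 1"
| "opt M (Suc 0) (Suc (Suc j)) = opt M 1 (Suc j) + M 1 (Suc (Suc j))"
| "opt M (Suc (Suc i)) (Suc 0) = opt M (Suc i) 1 + M (Suc (Suc i)) 1"
| "opt M (Suc (Suc i)) (Suc (Suc j)) = M (Suc (Suc i)) (Suc (Suc j)) +
     min (min (opt M (Suc i) (Suc j)) (opt M (Suc i) (Suc (Suc j)))) (opt M (Suc (Suc i)) (Suc j))"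

definition pcost :: "(nat \<Rightarrow> nat \<Rightarrow> real) \<Rightarrow> (nat \<times> nat) list \<Rightarrow> real" where
  "pcost M T = sum_list (map (\<lambda>(i, j). M i j) T)"

lemma pcost_snoc: "pcost M (T @ [(i,j)]) = pcost M T + M i j"
  by (simp add: pcost_def)

lemma opt_step: assumes "trav_step (i',j') (i,j)" "1 \<le> i'" "1 \<le> j'"
  shows "opt M i j \<le> opt M i' j' + M i j"
proof -
  obtain a where a: "i' = Suc a" using assms(2) by (cases i') auto
  obtain b where b: "j' = Suc b" using assms(3) by (cases j') auto
  have "(i, j) = (Suc (Suc a), Suc b) \<or> (i, j) = (Suc a, Suc (Suc b)) \<or> (i, j) = (Suc (Suc a), Suc (Suc b))"
    using assms(1) unfolding trav_step_def a b by auto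
  moreover have "opt M (Suc (Suc a)) (Suc b) \<le> opt M (Suc a) (Suc b) + M (Suc (Suc a)) (Suc b)"
  proof (cases b)
    case 0 then show ?thesis by (simp only: opt.simps One_nat_def; simp)
  next
    case (Suc b') then show ?thesis by (simp only: opt.simps; linarith)
  qed
  moreover have "opt M (Suc a) (Suc (Suc b)) \<le> opt M (Suc a) (Suc b) + M (Suc a) (Suc (Suc b))"
  proof (cases a)
    case 0 then show ?thesis by (simp only: opt.simps One_nat_def; simp)
  next
    case (Suc a') then show ?thesis by (simp only: opt.simps; linarith)
  qed
  moreover have "opt M (Suc (Suc a)) (Suc (Suc b)) \<le> opt M (Suc a) (Suc b) + M (Suc (Suc a)) (Suc (Suc b))"
    by (simp only: opt.simps; linarith)
  ultimately show ?thesis unfolding a b by auto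
qed

lemma opt_lower: "is_traversal i j T \<Longrightarrow> opt M i j \<le> pcost M T"
proof (induction "length T" arbitrary: T i j rule: less_induct)
  case less
  show ?case
  proof (cases "2 \<le> length T")
    case False
    have "T \<noteq> []" using less.prems unfolding is_traversal_def by auto
    then have "length T \<noteq> 0" by simp
    then have "length T = 1" using False by linarith
    then obtain x where "T = [x]" by (cases T) auto
    then have "T = [(1,1)]" "i = 1" "j = 1" using less.prems unfolding is_traversal_def by auto
    then show ?thesis by (simp add: pcost_def)
  next
    case True
    define p where "p = last (butlast T)"
    have bt: "is_traversal (fst p) (snd p) (butlast T)" "trav_step p (i,j)" "T = butlast T @ [(i,j)]"
      using trav_butlast[OF less.prems True] unfolding p_def by auto
    have "opt M (fst p) (snd p) \<le> pcost M (butlast T)"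
      using less.hyps[OF _ bt(1)] True by simp
    moreover have "opt M i j \<le> opt M (fst p) (snd p) + M i j"
      using opt_step[of "fst p" "snd p" i j M] bt(2) trav_bounds(3,4)[OF bt(1)] by simp
    moreover have "pcost M T = pcost M (butlast T) + M i j"
      using bt(3) pcost_snoc by metis
    ultimately show ?thesis by linarith
  qed
qed

lemma opt_attained: "1 \<le> i \<Longrightarrow> 1 \<le> j \<Longrightarrow> \<exists>T. is_traversal i j T \<and> pcost M T = opt M i j"
proof (induction M i j rule: opt.induct)
  case (1 M j) then show ?case by simp
next
  case (2 M i) then show ?case by simp
next
  case (3 M)
  have "is_traversal 1 1 [(1,1)]" unfolding is_traversal_def by simp
  then show ?case by (auto simp: pcost_def)
next
  case (4 M j)
  obtain T where T: "is_traversal 1 (Suc j) T" "pcost M T = opt M 1 (Suc j)" using 4 by auto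
  have "is_traversal 1 (Suc (Suc j)) (T @ [(1, Suc (Suc j))])"
    by (rule trav_snoc[OF T(1)]) (simp add: trav_step_def)
  then show ?case using T by (auto simp: pcost_snoc)
next
  case (5 M i)
  obtain T where T: "is_traversal (Suc i) 1 T" "pcost M T = opt M (Suc i) 1" using 5 by auto
  have "is_traversal (Suc (Suc i)) 1 (T @ [(Suc (Suc i), 1)])"
    by (rule trav_snoc[OF T(1)]) (simp add: trav_step_def)
  then show ?case using T by (auto simp: pcost_snoc)
next
  case (6 M i j)
  obtain T1 where T1: "is_traversal (Suc i) (Suc j) T1" "pcost M T1 = opt M (Suc i) (Suc j)" using 6 by auto
  obtain T2 where T2: "is_traversal (Suc i) (Suc (Suc j)) T2" "pcost M T2 = opt M (Suc i) (Suc (Suc j))" using 6 by auto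
  obtain T3 where T3: "is_traversal (Suc (Suc i)) (Suc j) T3" "pcost M T3 = opt M (Suc (Suc i)) (Suc j)" using 6 by auto
  have A1: "is_traversal (Suc (Suc i)) (Suc (Suc j)) (T1 @ [(Suc (Suc i), Suc (Suc j))])"
    by (rule trav_snoc[OF T1(1)]) (simp add: trav_step_def)
  have A2: "is_traversal (Suc (Suc i)) (Suc (Suc j)) (T2 @ [(Suc (Suc i), Suc (Suc j))])"
    by (rule trav_snoc[OF T2(1)]) (simp add: trav_step_def)
  have A3: "is_traversal (Suc (Suc i)) (Suc (Suc j)) (T3 @ [(Suc (Suc i), Suc (Suc j))])"
    by (rule trav_snoc[OF T3(1)]) (simp add: trav_step_def)
  show ?case
  proof (cases "opt M (Suc i) (Suc j) \<le> opt M (Suc i) (Suc (Suc j)) \<and> opt M (Suc i) (Suc j) \<le> opt M (Suc (Suc i)) (Suc j)")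
    case True then show ?thesis using A1 T1 by (intro exI[of _ "T1 @ [(Suc (Suc i), Suc (Suc j))]"]) (auto simp: pcost_snoc)
  next
    case F1: False
    show ?thesis
    proof (cases "opt M (Suc i) (Suc (Suc j)) \<le> opt M (Suc (Suc i)) (Suc j)")
      case True then show ?thesis using A2 T2 F1 by (intro exI[of _ "T2 @ [(Suc (Suc i), Suc (Suc j))]"]) (auto simp: pcost_snoc)
    next
      case False then show ?thesis using A3 T3 F1 by (intro exI[of _ "T3 @ [(Suc (Suc i), Suc (Suc j))]"]) (auto simp: pcost_snoc)
    qed
  qed
qed

lemma DTW_opt: assumes "1 \<le> m1" "1 \<le> m2" shows "DTW m1 m2 M = opt M m1 m2"
proof -
  obtain T where T: "is_traversal m1 m2 T" "pcost M T = opt M m1 m2" using opt_attained assms by blast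
  show ?thesis unfolding DTW_def
  proof (rule Min_eqI)
    show "finite ((\<lambda>T. sum_list (map (\<lambda>(i, j). M i j) T)) ` {T. is_traversal m1 m2 T})"
      using trav_finite by simp
    show "opt M m1 m2 \<in> (\<lambda>T. sum_list (map (\<lambda>(i, j). M i j) T)) ` {T. is_traversal m1 m2 T}"
      using T unfolding pcost_def by force
    fix y assume "y \<in> (\<lambda>T. sum_list (map (\<lambda>(i, j). M i j) T)) ` {T. is_traversal m1 m2 T}"
    then show "opt M m1 m2 \<le> y" using opt_lower unfolding pcost_def by force
  qed
qed


lemma opt_first: "1 \<le> j \<Longrightarrow> opt M 1 (Suc j) = opt M 1 j + M 1 (Suc j)"
  by (cases j) auto

lemma opt_col: "1 \<le> i \<Longrightarrow> opt M (Suc i) 1 = opt M i 1 + M (Suc i) 1"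
  by (cases i) auto

lemma opt_in: "1 \<le> i \<Longrightarrow> 1 \<le> j \<Longrightarrow>
  opt M (Suc i) (Suc j) = M (Suc i) (Suc j) + min (min (opt M i j) (opt M i (Suc j))) (opt M (Suc i) j)"
  by (cases i; cases j) auto

lemma first_row_aux_eq: "1 \<le> j0 \<Longrightarrow>
  first_row_aux (opt M 1 j0) (map (M 1) [Suc j0..<n]) = (map (opt M 1) [Suc j0..<n], n - Suc j0)"
proof (induction "n - Suc j0" arbitrary: j0)
  case 0
  then show ?case by simp
next
  case (Suc d)
  then have lt: "Suc j0 < n" by simp
  have IH: "first_row_aux (opt M 1 (Suc j0)) (map (M 1) [Suc (Suc j0)..<n]) = (map (opt M 1) [Suc (Suc j0)..<n], n - Suc (Suc j0))"
    using Suc by simp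
  show ?case using lt IH opt_first[OF Suc.prems, of M] by (simp add: upt_conv_Cons)
qed

lemma first_row_eq: "1 \<le> n \<Longrightarrow> first_row (map (M 1) [1..<n+1]) = (map (opt M 1) [1..<n+1], n - 1)"
proof -
  assume n: "1 \<le> n"
  have "[1..<n+1] = 1 # [Suc 1..<n+1]" using n by (simp add: upt_conv_Cons)
  moreover have "first_row_aux (opt M 1 1) (map (M 1) [Suc 1..<n+1]) = (map (opt M 1) [Suc 1..<n+1], n + 1 - Suc 1)"
    by (rule first_row_aux_eq) simp
  ultimately show ?thesis by simp
qed

lemma row_aux_eq: "1 \<le> i \<Longrightarrow> 1 \<le> j \<Longrightarrow>
  row_aux (opt M (Suc i) j) (opt M i j) (map (opt M i) [Suc j..<n]) (map (M (Suc i)) [Suc j..<n])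
   = (map (opt M (Suc i)) [Suc j..<n], 3 * (n - Suc j))"
proof (induction "n - Suc j" arbitrary: j)
  case 0
  then show ?case by simp
next
  case (Suc d)
  then have lt: "Suc j < n" by simp
  have IH: "row_aux (opt M (Suc i) (Suc j)) (opt M i (Suc j)) (map (opt M i) [Suc (Suc j)..<n]) (map (M (Suc i)) [Suc (Suc j)..<n])
   = (map (opt M (Suc i)) [Suc (Suc j)..<n], 3 * (n - Suc (Suc j)))"
    using Suc by simp
  show ?case using lt IH opt_in[OF Suc.prems, of M] by (simp add: upt_conv_Cons min.commute min.left_commute add.commute)
qed

lemma next_row_eq: "1 \<le> i \<Longrightarrow> 1 \<le> n \<Longrightarrow>
  next_row (map (opt M i) [1..<n+1]) (map (M (Suc i)) [1..<n+1]) = (map (opt M (Suc i)) [1..<n+1], 3 * (n - 1) + 1)"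
proof -
  assume i: "1 \<le> i" and n: "1 \<le> n"
  have u: "[1..<n+1] = 1 # [Suc 1..<n+1]" using n by (simp add: upt_conv_Cons)
  have r: "row_aux (opt M (Suc i) 1) (opt M i 1) (map (opt M i) [Suc 1..<n+1]) (map (M (Suc i)) [Suc 1..<n+1])
   = (map (opt M (Suc i)) [Suc 1..<n+1], 3 * (n + 1 - Suc 1))"
    by (rule row_aux_eq) (use i in auto)
  show ?thesis unfolding u using r opt_col[OF i, of M] by (simp add: add.commute)
qed

lemma dp_rows_eq: "1 \<le> i \<Longrightarrow> i \<le> m \<Longrightarrow> 1 \<le> n \<Longrightarrow>
  dp_rows (map (opt M i) [1..<n+1]) (map (\<lambda>i'. map (M i') [1..<n+1]) [Suc i..<m+1])
   = (map (opt M m) [1..<n+1], (m - i) * (3 * (n - 1) + 1))"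
proof (induction "m - i" arbitrary: i)
  case 0
  then have "i = m" by simp
  then show ?case by simp
next
  case (Suc d)
  then have lt: "Suc i < m + 1" by simp
  have IH: "dp_rows (map (opt M (Suc i)) [1..<n+1]) (map (\<lambda>i'. map (M i') [1..<n+1]) [Suc (Suc i)..<m+1])
   = (map (opt M m) [1..<n+1], (m - Suc i) * (3 * (n - 1) + 1))"
    using Suc by simp
  have nr: "next_row (map (opt M i) [1..<n+1]) (map (M (Suc i)) [1..<n+1]) = (map (opt M (Suc i)) [1..<n+1], 3 * (n - 1) + 1)"
    by (rule next_row_eq) (use Suc.prems in auto)
  have mi: "m - i = Suc (m - Suc i)" using lt by simp
  have u: "[Suc i..<m+1] = Suc i # [Suc (Suc i)..<m+1]" using lt by (simp only: upt_conv_Cons)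
  have ar: "(m - i) * (3*(n-1)+1) = (3*(n-1)+1) + (m - Suc i) * (3*(n-1)+1)" using mi by (metis mult_Suc)
  show ?case unfolding u list.map(2) dp_rows.simps nr by (simp only: Let_def prod.case IH ar)
qed

definition cdp :: "nat \<Rightarrow> nat \<Rightarrow> nat" where
  "cdp m n = (n - 1) + (m - 1) * (3 * (n - 1) + 1)"

lemma dtw_dp_eq: "1 \<le> m \<Longrightarrow> 1 \<le> n \<Longrightarrow>
  dtw_dp (map (\<lambda>i. map (\<lambda>j. M i j) [1..<n+1]) [1..<m+1]) = (DTW m n M, cdp m n)"
proof -
  assume m: "1 \<le> m" and n: "1 \<le> n"
  have u: "[1..<m+1] = 1 # [Suc 1..<m+1]" using m by (simp add: upt_conv_Cons)
  have fr: "first_row (map (M 1) [1..<n+1]) = (map (opt M 1) [1..<n+1], n - 1)"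
    by (rule first_row_eq[OF n])
  have dr: "dp_rows (map (opt M 1) [1..<n+1]) (map (\<lambda>i'. map (M i') [1..<n+1]) [Suc 1..<m+1])
   = (map (opt M m) [1..<n+1], (m - 1) * (3 * (n - 1) + 1))"
    by (rule dp_rows_eq) (use m n in auto)
  have l: "last (map (opt M m) [1..<n+1]) = opt M m n" using n by (simp add: last_map)
  show ?thesis unfolding u using fr dr l DTW_opt[OF m n, of M] by (simp add: cdp_def)
qed

lemma cdp_le: "1 \<le> m \<Longrightarrow> 1 \<le> n \<Longrightarrow> cdp m n \<le> 3 * (m * n)"
proof -
  assume m: "1 \<le> m" and n: "1 \<le> n"
  have "(m-1)*(3*(n-1)+1) \<le> (m-1)*(3*n)" by (rule mult_le_mono2) (use n in arith)
  moreover have "(n-1) + (m-1)*(3*n) \<le> 3*(m*n)" using m by (cases m) auto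
  ultimately show ?thesis unfolding cdp_def by linarith
qed

lemma shifted_eq: "shifted e D = (map (map (\<lambda>x. max (x - e) 0)) D, 2 * length (concat D))"
  by (induction D) (auto simp: shifted_def map_c_eq o_def map_replicate_const sum_list_replicate)

lemma main_loop_eq:
  assumes "\<And>e. snd (shifted e D) = cs" "\<And>e. snd (dtw_dp (fst (shifted e D))) = cd"
  shows "main_loop k D es mc = (min mc (INF e\<in>set es. ereal (fst (dtw_dp (fst (shifted e D))) + real k * e)),
     length es * (cs + cd + 3))"
proof (induction es arbitrary: mc)
  case Nil
  then show ?case by simp
next
  case (Cons e es)
  obtain D' c1 where s: "shifted e D = (D', c1)" by fastforce
  obtain d c2 where t: "dtw_dp D' = (d, c2)" by fastforce
  have c: "c1 = cs" "c2 = cd" using assms[of e] s t by auto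
  show ?case using Cons[of "min mc (ereal (d + real k * e))"] s t c
    by (simp add: inf_min min.assoc)
qed


lemma sum_cut: "sum_list (map (\<lambda>x. max (x-t) 0) (map (\<lambda>(i,j). N i j) T)) = pcost (\<lambda>i j. max (N i j - t) 0) T"
  by (induction T) (auto simp: pcost_def)

lemma alg_value:
  fixes v w :: "nat \<Rightarrow> 'a::real_normed_vector"
  assumes m1: "1 \<le> m1" and m2: "1 \<le> m2" and E: "set E = insert 0 {norm (v i - w j) | i j. i \<in> {1..m1} \<and> j \<in> {1..m2}}"
  shows "(INF e\<in>set E. ereal (DTW m1 m2 (\<lambda>i j. max (norm (v i - w j) - e) 0) + real k * e)) = ereal (kDTW k v m1 w m2)"
proof -
  let ?S = "{norm (v i - w j) | i j. i \<in> {1..m1} \<and> j \<in> {1..m2}}"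
  let ?Tr = "{T. is_traversal m1 m2 T}"
  let ?val = "\<lambda>e. DTW m1 m2 (\<lambda>i j. max (norm (v i - w j) - e) 0) + real k * e"
  define K where "K = kDTW k v m1 w m2"
  obtain T0 where T0: "is_traversal m1 m2 T0" using opt_attained[OF m1 m2] by blast
  have fin: "finite (topk_cost k v w ` ?Tr)" using trav_finite by simp
  have ne: "topk_cost k v w ` ?Tr \<noteq> {}" using T0 by auto
  have "K \<in> topk_cost k v w ` ?Tr" unfolding K_def kDTW_def by (rule Min_in[OF fin ne])
  then obtain Ts where Ts: "is_traversal m1 m2 Ts" "topk_cost k v w Ts = K" by auto
  have Kle: "K \<le> topk_cost k v w T" if "is_traversal m1 m2 T" for T
    unfolding K_def kDTW_def using that fin by (intro Min_le) auto
  define xs where "xs = map (\<lambda>(i,j). norm (v i - w j)) Ts"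
  have "\<forall>x\<in>set xs. 0 \<le> x" unfolding xs_def by auto
  then obtain t where t: "t \<in> insert 0 (set xs)"
    "sum_list (take k (rev (sort xs))) = real k * t + sum_list (map (\<lambda>x. max (x-t) 0) xs)"
    using topk_exact by blast
  have "set xs \<subseteq> ?S" using trav_bounds(1)[OF Ts(1)] unfolding xs_def by fastforce
  then have tE: "t \<in> set E" using t(1) E by auto
  have "K = real k * t + pcost (\<lambda>i j. max (norm (v i - w j) - t) 0) Ts"
    using t(2) Ts(2) sum_cut[of t "\<lambda>i j. norm (v i - w j)" Ts] unfolding topk_cost_def xs_def by simp
  moreover have "DTW m1 m2 (\<lambda>i j. max (norm (v i - w j) - t) 0) \<le> pcost (\<lambda>i j. max (norm (v i - w j) - t) 0) Ts"
    using DTW_opt[OF m1 m2] opt_lower[OF Ts(1)] by simp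
  ultimately have up: "?val t \<le> K" by simp
  have low: "K \<le> ?val e" if "e \<in> set E" for e
  proof -
    have e0: "0 \<le> e" using that E by auto
    obtain Te where Te: "is_traversal m1 m2 Te" "pcost (\<lambda>i j. max (norm (v i - w j) - e) 0) Te = opt (\<lambda>i j. max (norm (v i - w j) - e) 0) m1 m2"
      using opt_attained[OF m1 m2] by blast
    have "topk_cost k v w Te \<le> real k * e + sum_list (map (\<lambda>x. max (x-e) 0) (map (\<lambda>(i,j). norm (v i - w j)) Te))"
      unfolding topk_cost_def by (rule topk_bound[OF e0])
    also have "\<dots> = real k * e + pcost (\<lambda>i j. max (norm (v i - w j) - e) 0) Te"
      using sum_cut[of e "\<lambda>i j. norm (v i - w j)" Te] by simp
    also have "\<dots> = ?val e" using Te(2) DTW_opt[OF m1 m2] by simp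
    finally show ?thesis using Kle[OF Te(1)] by simp
  qed
  show ?thesis unfolding K_def[symmetric]
  proof (rule antisym)
    show "(INF e\<in>set E. ereal (?val e)) \<le> ereal K"
      using INF_lower[OF tE, of "\<lambda>e. ereal (?val e)"] up by (meson ereal_less_eq(3) order_trans)
    show "ereal K \<le> (INF e\<in>set E. ereal (?val e))"
      by (rule INF_greatest) (use low in simp)
  qed
qed


lemma inS: "i \<in> A \<Longrightarrow> j \<in> B \<Longrightarrow> f i j \<in> {f i j | i j. i \<in> A \<and> j \<in> B}"
  by blast

lemma main_result:
  fixes v w :: "nat \<Rightarrow> 'a::real_normed_vector"
  assumes m1: "1 \<le> m1" and m2: "1 \<le> m2"
  shows "fst (kDTW_alg k v m1 w m2) = ereal (kDTW k v m1 w m2) \<and>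
       real (snd (kDTW_alg k v m1 w m2)) \<le> 20 * real m1 * real m2 * real (num_dist v m1 w m2)"
proof -
  define D where "D = map (\<lambda>i. map (\<lambda>j. norm (v i - w j)) [1..<m2+1]) [1..<m1+1]"
  let ?S = "{norm (v i - w j) | i j. i \<in> {1..m1} \<and> j \<in> {1..m2}}"
  define z where "z = num_dist v m1 w m2"
  have setD: "set (concat D) = ?S"
  proof
    show "set (concat D) \<subseteq> ?S"
    proof
      fix x assume "x \<in> set (concat D)"
      then obtain i j where ij: "i \<in> set [1..<m1+1]" "j \<in> set [1..<m2+1]" "x = norm (v i - w j)"
        unfolding D_def by auto
      then have "i \<in> {1..m1}" "j \<in> {1..m2}" by auto
      then show "x \<in> ?S" unfolding ij(3) by (rule inS)
    qed
    show "?S \<subseteq> set (concat D)"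
      unfolding D_def by (auto simp del: upt_Suc simp add: atLeastLessThanSuc_atLeastAtMost)
  qed
  have finS: "finite ?S" using setD[symmetric] by simp
  have nm: "norm (v 1 - w 1) \<in> ?S" by (rule inS) (use m1 m2 in auto)
  have "0 < card ?S" unfolding card_gt_0_iff using finS nm by auto
  then have z1: "1 \<le> z" unfolding z_def num_dist_def by simp
  have lenD: "length (concat D) = m1 * m2"
    unfolding D_def by (simp add: length_concat o_def map_replicate_const sum_list_replicate)
  obtain E0 c2 where ia: "ins_all (concat D) [] = (E0, c2)" by fastforce
  have P: "sorted_wrt (>) E0 \<and> set E0 = set [] \<union> set (concat D) \<and> c2 \<le> 2 * length (concat D) * card ?S"
    by (rule ins_all_prop[OF _ _ _ finS ia]) (use setD in auto)
  have dE0: "distinct E0" using P sorted_gt_distinct[of E0] by blast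
  have sE0: "set E0 = ?S" using P setD by simp
  have lenE0: "length E0 = z"
    unfolding z_def num_dist_def sE0[symmetric] using distinct_card[OF dE0] by simp
  have c2: "c2 \<le> 2 * (m1 * m2) * z" using P lenD unfolding z_def num_dist_def by simp
  have th: "thresholds D = (E0 @ [0], c2)" unfolding thresholds_def using ia by simp
  have setE: "set (E0 @ [0]) = insert 0 ?S" using P setD by auto
  have sh: "snd (shifted e D) = 2 * (m1 * m2)" for e by (simp add: shifted_eq lenD)
  have shf: "fst (shifted e D) = map (\<lambda>i. map (\<lambda>j. max (norm (v i - w j) - e) 0) [1..<m2+1]) [1..<m1+1]" for e
    by (simp add: shifted_eq D_def o_def)
  have dd: "dtw_dp (fst (shifted e D)) = (DTW m1 m2 (\<lambda>i j. max (norm (v i - w j) - e) 0), cdp m1 m2)" for e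
    unfolding shf by (rule dtw_dp_eq[OF m1 m2])
  have ml: "main_loop k D (E0 @ [0]) \<infinity> = (min \<infinity> (INF e\<in>set (E0 @ [0]). ereal (fst (dtw_dp (fst (shifted e D))) + real k * e)),
     length (E0 @ [0]) * (2 * (m1 * m2) + cdp m1 m2 + 3))"
    by (rule main_loop_eq) (use sh dd in auto)
  have val: "(INF e\<in>set (E0 @ [0]). ereal (fst (dtw_dp (fst (shifted e D))) + real k * e)) = ereal (kDTW k v m1 w m2)"
    using alg_value[OF m1 m2 setE, of k] dd by simp
  have dm: "dist_matrix v m1 w m2 = (D, m1 * m2)" unfolding D_def by (rule dist_matrix_eq)
  define c3 where "c3 = (z + 1) * (2 * (m1 * m2) + cdp m1 m2 + 3)"
  have alg: "kDTW_alg k v m1 w m2 = (ereal (kDTW k v m1 w m2), m1 * m2 + c2 + c3)"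
  proof -
    have ml2: "main_loop k D (E0 @ [0]) \<infinity> = (ereal (kDTW k v m1 w m2), c3)"
      using ml val lenE0 unfolding c3_def by simp
    show ?thesis by (simp add: kDTW_alg_def dm th ml2)
  qed
  define p where "p = m1 * m2"
  have p1: "1 \<le> p" unfolding p_def using m1 m2 by simp
  have cd: "cdp m1 m2 \<le> 3 * p" unfolding p_def by (rule cdp_le[OF m1 m2])
  have "2 * p + cdp m1 m2 + 3 \<le> 8 * p" using cd p1 by linarith
  moreover have "z + 1 \<le> 2 * z" using z1 by simp
  ultimately have "c3 \<le> (2 * z) * (8 * p)" unfolding c3_def p_def[symmetric] by (intro mult_le_mono)
  then have a: "c3 \<le> 16 * (p * z)" by (simp add: algebra_simps)
  have b: "p \<le> p * z" using z1 by simp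
  have c: "c2 \<le> 2 * (p * z)" using c2 unfolding p_def by (simp add: algebra_simps)
  have "p + c2 + c3 \<le> 19 * (p * z)" using a b c by linarith
  then have "m1 * m2 + c2 + c3 \<le> 19 * (p * z)" unfolding p_def .
  then have "real (m1 * m2 + c2 + c3) \<le> 19 * (real p * real z)" by (metis of_nat_le_iff of_nat_mult of_nat_numeral)
  also have "\<dots> \<le> 20 * (real p * real z)" by simp
  finally have "real (m1 * m2 + c2 + c3) \<le> 20 * real m1 * real m2 * real z" unfolding p_def by (simp add: algebra_simps)
  then show ?thesis using alg unfolding z_def by simp
qed

theorem theorem3p2:
  "\<exists>C::real. \<forall>(v :: nat \<Rightarrow> 'a::euclidean_space) (w :: nat \<Rightarrow> 'a) (m1::nat) (m2::nat) (k::nat).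
     m1 \<ge> 1 \<longrightarrow> m2 \<ge> 1 \<longrightarrow>
       fst (kDTW_alg k v m1 w m2) = ereal (kDTW k v m1 w m2) \<and>
       real (snd (kDTW_alg k v m1 w m2)) \<le> C * real m1 * real m2 * real (num_dist v m1 w m2)"
  apply (rule exI[of _ 20])
  apply (intro allI impI)
  apply (rule main_result)
   apply assumption+
  done

end
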